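(* Let $\{(\iota_1,z_1^* ),\dots,(\iota_J,z_J^* )\}$ be minimally degenerate, let $\vec{\mathfrak c}\in(0,\infty)^J$ be the unique unit positive vector with $\ker A^*=\mathbb{R}\vec{\mathfrak c}$, and assume $$\sum_{i=1}^J|v_i^*|^2>0,\qquad v_i^*:=\sum_{j=1}^J\frac{A^*_{ij}\mathfrak c_i\mathfrak c_j}{|z_i^*-z_j^*|^2}(z_j^*-z_i^* )\in\mathbb{R}^N.$$ Then for any $K_0>0$ and $\delta_1>0$ there exists $\delta_2>0$ such that $$\sum_{i}\lambda_i^{2D-2}(A[\vec z]\vec\lambda^D)_i^2+\sum_i\lambda_i^{2D}\Big|\sum_j\frac{A[\vec z]_{ij}\lambda_j^D(z_i-z_j)}{|z_i-z_j|^2}\Big|^2\simeq_{K_0,\delta_1}\lambda_{\max}^{2D-2}|A[\vec z]\vec\lambda^D|^2+\lambda_{\max}^{4D}$$ for all $\vec\lambda\in(0,\infty)^J$ and $\vec z\in(\mathbb{R}^N)^J$ with $\lambda_{\max}\le K_0$, $\lambda_{\mathrm{max2}}\ge\delta_1\lambda_{\max}$ and $|\vec z-\vec z^*|<\delta_2$.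
   Context: $N\ge7$, $D=\frac{N-2}2$; $\iota_i\in\{\pm1\}$, distinct $z_i^*\in\mathbb{R}^N$. For $\vec z=(z_1,\dots,z_J)$, $A[\vec z]_{ij}=\mathbf 1_{i\ne j}\kappa_0\kappa_\infty\frac{\iota_i\iota_j}{|z_i-z_j|^{N-2}}$ (fixed positive constants $\kappa_0,\kappa_\infty$) and $A^*=A[\vec z^*]$. Minimally degenerate: $A^*$ has a nonzero kernel element in $[0,\infty)^J$ but for every proper subset $\mathcal I$ with $|\mathcal I|\ge2$ the submatrix $A^*_{\mathcal I}$ has none in $[0,\infty)^{\mathcal I}$. $\vec\lambda^D=(\lambda_i^D)_i$, $\lambda_{\max}$, $\lambda_{\mathrm{max2}}$ largest and second largest $\lambda_i$; terms with $i=j$ vanish since $A[\vec z]_{ii}=0$. *)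

theory Defs
  imports "HOL-Analysis.Analysis"
begin

text \<open>Points z = (z_1,...,z_J) in (R^N)^J are elements of (real^'n)^'j; the index
type 'j is the finite index set {1..J}, 'n the coordinate set {1..N}.\<close>

definition Dexp :: "'n::finite itself \<Rightarrow> real" where
  "Dexp _ = (real CARD('n) - 2) / 2"

definition Amat :: "real \<Rightarrow> real \<Rightarrow> ('j::finite \<Rightarrow> real) \<Rightarrow> (real^'n::finite)^'j \<Rightarrow> real^'j^'j" where
  "Amat k0 kinf iota z = (\<chi> i j. if i = j then 0
      else k0 * kinf * iota i * iota j / norm (z$i - z$j) ^ (CARD('n) - 2))"

definition minimally_degenerate :: "real^'j^'j::finite \<Rightarrow> bool" where
  "minimally_degenerate M \<longleftrightarrow>
     (\<exists>x. x \<noteq> 0 \<and> (\<forall>i. x$i \<ge> 0) \<and> M *v x = 0) \<and>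
     (\<forall>I. I \<subset> (UNIV::'j set) \<and> card I \<ge> 2 \<longrightarrow>
        \<not> (\<exists>x::'j \<Rightarrow> real. (\<forall>i\<in>I. x i \<ge> 0) \<and> (\<exists>i\<in>I. x i \<noteq> 0) \<and>
               (\<forall>i\<in>I. (\<Sum>j\<in>I. M$i$j * x j) = 0)))"

definition lam_max :: "real^'j::finite \<Rightarrow> real" where
  "lam_max l = Max (range (\<lambda>i. l$i))"

text \<open>Second largest entry (counted with multiplicity).\<close>
definition lam_max2 :: "real^'j::finite \<Rightarrow> real" where
  "lam_max2 l = Max {min (l$i) (l$j) | i j. i \<noteq> j}"

definition powD :: "real^'j::finite \<Rightarrow> real \<Rightarrow> real^'j" where
  "powD l D = (\<chi> i. (l$i) powr D)"

end

theory Submission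
  imports Defs
begin


definition Pf :: "real \<Rightarrow> real^'j^'j \<Rightarrow> real^'j::finite \<Rightarrow> real" where
  "Pf D A m = (\<Sum>i\<in>UNIV. (m$i) powr (2*D - 2) * ((A *v powD m D)$i)\<^sup>2)"

definition Qf :: "real \<Rightarrow> real^'j^'j \<Rightarrow> (real^'n::finite)^'j \<Rightarrow> real^'j::finite \<Rightarrow> real" where
  "Qf D A z m = (\<Sum>i\<in>UNIV. (m$i) powr (2*D) *
      (norm (\<Sum>j\<in>UNIV. (A$i$j * powD m D$j / (norm (z$i - z$j))\<^sup>2) *\<^sub>R (z$i - z$j)))\<^sup>2)"

definition Rf :: "real \<Rightarrow> real^'j^'j \<Rightarrow> real^'j::finite \<Rightarrow> real" where
  "Rf D A m = (norm (A *v powD m D))\<^sup>2"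

lemma cont_A:
  fixes S :: "((real^'j::finite) \<times> ((real^'n::finite)^'j)) set"
  assumes "\<forall>p\<in>S. \<forall>i j. i \<noteq> j \<longrightarrow> snd p $ i \<noteq> snd p $ j"
  shows "continuous_on S (\<lambda>p. Amat k0 kinf iota (snd p) $ i $ j)"
proof (cases "i = j")
  case True
  then show ?thesis by (simp add: Amat_def)
next
  case False
  have "continuous_on S (\<lambda>p. k0 * kinf * iota i * iota j / norm (snd p $ i - snd p $ j) ^ (CARD('n) - 2))"
    using assms False by (intro continuous_intros) auto
  then show ?thesis using False by (simp add: Amat_def)
qed

lemma cont_pow:
  fixes S :: "((real^'j::finite) \<times> ((real^'n::finite)^'j)) set"
  assumes "\<forall>p\<in>S. \<forall>i. 0 \<le> fst p $ i" "e > 0"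
  shows "continuous_on S (\<lambda>p. fst p $ i powr e)"
  using assms by (intro continuous_on_powr' continuous_on_component continuous_on_fst continuous_on_id continuous_on_const) auto

lemma cont_mv:
  fixes S :: "((real^'j::finite) \<times> ((real^'n::finite)^'j)) set"
  assumes "\<forall>p\<in>S. \<forall>i j. i \<noteq> j \<longrightarrow> snd p $ i \<noteq> snd p $ j" "\<forall>p\<in>S. \<forall>i. 0 \<le> fst p $ i" "D > 0"
  shows "continuous_on S (\<lambda>p. (Amat k0 kinf iota (snd p) *v powD (fst p) D) $ i)"
proof -
  have "continuous_on S (\<lambda>p. \<Sum>j\<in>UNIV. Amat k0 kinf iota (snd p) $ i $ j * fst p $ j powr D)"
    by (intro continuous_on_sum continuous_on_mult cont_A cont_pow assms)
  then show ?thesis by (simp add: matrix_vector_mult_def powD_def)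
qed

lemma cont_term:
  fixes S :: "((real^'j::finite) \<times> ((real^'n::finite)^'j)) set"
  assumes "\<forall>p\<in>S. \<forall>i j. i \<noteq> j \<longrightarrow> snd p $ i \<noteq> snd p $ j" "\<forall>p\<in>S. \<forall>i. 0 \<le> fst p $ i" "D > 0"
  shows "continuous_on S (\<lambda>p. (Amat k0 kinf iota (snd p) $ i $ j * powD (fst p) D $ j
      / (norm (snd p $ i - snd p $ j))\<^sup>2) *\<^sub>R (snd p $ i - snd p $ j))"
proof (cases "i = j")
  case True
  then show ?thesis by (simp add: Amat_def)
next
  case False
  have "continuous_on S (\<lambda>p. (Amat k0 kinf iota (snd p) $ i $ j * fst p $ j powr D
      / (norm (snd p $ i - snd p $ j))\<^sup>2) *\<^sub>R (snd p $ i - snd p $ j))"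
    using assms False
    by (intro continuous_on_scaleR continuous_on_divide continuous_on_mult cont_A cont_pow)
      (auto intro!: continuous_intros)
  then show ?thesis by (simp add: powD_def)
qed

lemma cont_PQR:
  fixes S :: "((real^'j::finite) \<times> ((real^'n::finite)^'j)) set"
  assumes "\<forall>p\<in>S. \<forall>i j. i \<noteq> j \<longrightarrow> snd p $ i \<noteq> snd p $ j" "\<forall>p\<in>S. \<forall>i. 0 \<le> fst p $ i" "D > 1"
  shows "continuous_on S (\<lambda>p. Pf D (Amat k0 kinf iota (snd p)) (fst p))"
    "continuous_on S (\<lambda>p. Qf D (Amat k0 kinf iota (snd p)) (snd p) (fst p))"
    "continuous_on S (\<lambda>p. Rf D (Amat k0 kinf iota (snd p)) (fst p))"
proof -
  show "continuous_on S (\<lambda>p. Pf D (Amat k0 kinf iota (snd p)) (fst p))"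
    unfolding Pf_def using assms
    by (intro continuous_on_sum continuous_on_mult continuous_on_power cont_pow cont_mv) auto
  show "continuous_on S (\<lambda>p. Qf D (Amat k0 kinf iota (snd p)) (snd p) (fst p))"
    unfolding Qf_def using assms
    by (intro continuous_on_sum continuous_on_mult continuous_on_power continuous_on_norm cont_pow cont_term) auto
  have "continuous_on S (\<lambda>p. Amat k0 kinf iota (snd p) *v powD (fst p) D)"
    using assms
    by (subst vec_lambda_eta[symmetric], intro continuous_on_vec_lambda cont_mv) auto
  then show "continuous_on S (\<lambda>p. Rf D (Amat k0 kinf iota (snd p)) (fst p))"
    unfolding Rf_def by (intro continuous_intros)
qed



lemma unif_pos:
  fixes F :: "'a::metric_space \<times> 'b::heine_borel \<Rightarrow> real"
  assumes M: "compact M" and r: "r > 0" and cont: "continuous_on (M \<times> cball z0 r) F"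
    and pos: "\<forall>m\<in>M. F (m, z0) > 0"
  shows "\<exists>c>0. \<exists>d>0. d \<le> r \<and> (\<forall>m\<in>M. \<forall>z. dist z0 z < d \<longrightarrow> F (m, z) \<ge> c)"
proof (cases "M = {}")
  case True
  then show ?thesis using r by (intro exI[of _ 1] exI[of _ r]) auto
next
  case False
  have K: "compact (M \<times> cball z0 r)" using M by (intro compact_Times) auto
  have c1: "continuous_on M (\<lambda>m. F (m, z0))"
    by (rule continuous_on_compose2[OF cont]) (use r in \<open>auto intro!: continuous_intros\<close>)
  obtain m0 where m0: "m0 \<in> M" "\<forall>m\<in>M. F (m0, z0) \<le> F (m, z0)"
    using continuous_attains_inf[OF M False c1] by blast
  define c where "c = F (m0, z0)"
  have cpos: "c > 0" using pos m0 by (auto simp: c_def)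
  have "uniformly_continuous_on (M \<times> cball z0 r) F"
    using compact_uniformly_continuous[OF cont K] .
  then obtain d where d: "d > 0" "\<forall>x\<in>M \<times> cball z0 r. \<forall>x'\<in>M \<times> cball z0 r. dist x' x < d \<longrightarrow> dist (F x') (F x) < c/2"
    unfolding uniformly_continuous_on_def using cpos by (meson half_gt_zero)
  show ?thesis
  proof -
  have "\<forall>m\<in>M. \<forall>z. dist z0 z < min d r \<longrightarrow> F (m, z) \<ge> c/2"
  proof (intro ballI allI impI)
    fix m z assume m: "m \<in> M" and z: "dist z0 z < min d r"
    have "(m, z) \<in> M \<times> cball z0 r" "(m, z0) \<in> M \<times> cball z0 r" using m z r by auto
    moreover have "dist (m, z) (m, z0) < d" using z by (simp add: dist_Pair_Pair dist_commute)
    ultimately have "dist (F (m, z)) (F (m, z0)) < c/2" using d by blast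
    moreover have "F (m, z0) \<ge> c" using m0 m by (auto simp: c_def)
    ultimately have "\<bar>F (m, z) - F (m, z0)\<bar> < c/2" "F (m, z0) \<ge> c" by (auto simp: dist_real_def)
    then show "F (m, z) \<ge> c/2" using abs_less_iff[of "F (m, z) - F (m, z0)" "c/2"] by linarith
  qed
  then show ?thesis using cpos d r by (intro exI[of _ "c/2"]) (auto intro!: exI[of _ "min d r"])
  qed
qed

lemma unif_bound:
  fixes F :: "'a::metric_space \<Rightarrow> real"
  assumes "compact K" "continuous_on K F"
  shows "\<exists>B. \<forall>p\<in>K. F p \<le> B"
proof -
  have "bounded (F ` K)" using compact_continuous_image[OF assms(2,1)] compact_imp_bounded by blast
  then obtain B where "\<forall>x\<in>F ` K. norm x \<le> B" using bounded_iff by blast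
  then show ?thesis by (intro exI[of _ B]) auto
qed



lemma powD_scale: "powD (s *\<^sub>R m) D = (s powr D) *\<^sub>R powD m D"
  by (simp add: powD_def vec_eq_iff powr_mult)

lemma powr_2D: "x powr (2*D) = (x powr D)\<^sup>2" for x D :: real
  by (simp add: power2_eq_square powr_add[symmetric])

lemma scale_P:
  assumes "s > 0"
  shows "(\<Sum>i\<in>UNIV. ((s *\<^sub>R m)$i) powr (2*D - 2) * ((A *v powD (s *\<^sub>R m) D)$i)\<^sup>2)
       = s powr (4*D - 2) * Pf D A m"
proof -
  have e: "s powr (4*D - 2) = s powr (2*D - 2) * (s powr D)\<^sup>2"
    by (simp add: powr_2D[symmetric] powr_add[symmetric])
  show ?thesis unfolding Pf_def e
    by (simp add: powD_scale matrix_vector_mult_scaleR powr_mult sum_distrib_left power_mult_distrib algebra_simps)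
qed

lemma scale_Q:
  assumes "s > 0"
  shows "(\<Sum>i\<in>UNIV. ((s *\<^sub>R m)$i) powr (2*D) *
           (norm (\<Sum>j\<in>UNIV. (A$i$j * powD (s *\<^sub>R m) D$j / (norm (z$i - z$j))\<^sup>2) *\<^sub>R (z$i - z$j)))\<^sup>2)
       = s powr (4*D) * Qf D A z m"
proof -
  have e: "s powr (4*D) = s powr (2*D) * (s powr D)\<^sup>2"
    by (simp add: powr_2D[symmetric] powr_add[symmetric])
  have i: "(\<Sum>j\<in>UNIV. (A$i$j * powD (s *\<^sub>R m) D$j / (norm (z$i - z$j))\<^sup>2) *\<^sub>R (z$i - z$j))
     = (s powr D) *\<^sub>R (\<Sum>j\<in>UNIV. (A$i$j * powD m D$j / (norm (z$i - z$j))\<^sup>2) *\<^sub>R (z$i - z$j))" for i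
    by (simp add: powD_scale scaleR_sum_right mult.left_commute)
  show ?thesis unfolding Qf_def e i
    using assms by (simp add: powr_mult sum_distrib_left power_mult_distrib algebra_simps)
qed

lemma scale_R:
  assumes "s > 0"
  shows "s powr (2*D - 2) * (norm (A *v powD (s *\<^sub>R m) D))\<^sup>2 = s powr (4*D - 2) * Rf D A m"
proof -
  have e: "s powr (4*D - 2) = s powr (2*D - 2) * (s powr D)\<^sup>2"
    by (simp add: powr_2D[symmetric] powr_add[symmetric])
  show ?thesis unfolding Rf_def e
    using assms by (simp add: powD_scale matrix_vector_mult_scaleR power_mult_distrib)
qed

lemma scale_4D:
  fixes s D :: real
  assumes "s > 0"
  shows "s powr (4*D) = s powr (4*D - 2) * s\<^sup>2"
proof -
  have "s powr (4*D) = s powr (4*D - 2) * s powr 2" by (simp add: powr_add[symmetric])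
  then show ?thesis using assms by (simp add: powr_numeral)
qed



lemma P_zero_kernel:
  fixes A :: "real^'j^'j::finite" and m :: "real^'j"
  assumes mindeg: "minimally_degenerate A"
    and nn: "\<forall>i. 0 \<le> m$i" and ij: "i1 \<noteq> j1" "m$i1 > 0" "m$j1 > 0"
    and P0: "Pf D A m = 0"
  shows "(\<forall>i. m$i > 0) \<and> A *v powD m D = 0"
proof -
  have all0: "\<forall>i\<in>UNIV. m$i powr (2*D - 2) * ((A *v powD m D)$i)\<^sup>2 = 0"
    using P0 unfolding Pf_def by (subst sum_nonneg_eq_0_iff[symmetric]) auto
  have r0: "(A *v powD m D)$i = 0" if "m$i > 0" for i
  proof -
    have "m$i powr (2*D - 2) * ((A *v powD m D)$i)\<^sup>2 = 0" using all0 by blast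
    then show ?thesis using that by simp
  qed
  define I where "I = {i. m$i > 0}"
  have allpos: "\<forall>i. m$i > 0"
  proof (rule ccontr)
    assume "\<not> (\<forall>i. m$i > 0)"
    then have sub: "I \<subset> UNIV" unfolding I_def by auto
    have "card {i1, j1} \<le> card I" by (rule card_mono) (use ij in \<open>auto simp: I_def\<close>)
    then have c2: "card I \<ge> 2" using ij by simp
    define x where "x = (\<lambda>j. m$j powr D)"
    have "\<forall>i\<in>I. (\<Sum>j\<in>I. A$i$j * x j) = 0"
    proof
      fix i assume iI: "i \<in> I"
      have "(\<Sum>j\<in>I. A$i$j * x j) = (\<Sum>j\<in>UNIV. A$i$j * x j)"
      proof (rule sum.mono_neutral_left)
        show "\<forall>j\<in>UNIV - I. A$i$j * x j = 0"
        proof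
          fix j assume "j \<in> UNIV - I"
          then have "m$j = 0" using nn[rule_format, of j] by (auto simp: I_def)
          then show "A$i$j * x j = 0" by (simp add: x_def)
        qed
      qed auto
      also have "\<dots> = (A *v powD m D)$i" by (simp add: matrix_vector_mult_def powD_def x_def)
      also have "\<dots> = 0" using r0 iI by (simp add: I_def)
      finally show "(\<Sum>j\<in>I. A$i$j * x j) = 0" .
    qed
    moreover have "\<forall>i\<in>I. x i \<ge> 0" by (simp add: x_def)
    moreover have "\<exists>i\<in>I. x i \<noteq> 0" using ij by (intro bexI[of _ i1]) (auto simp: x_def I_def)
    ultimately show False using mindeg sub c2 unfolding minimally_degenerate_def by blast
  qed
  moreover have "A *v powD m D = 0" using r0 allpos by (simp add: vec_eq_iff)
  ultimately show ?thesis by blast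
qed



lemma Q_kernel:
  fixes A :: "real^'j^'j::finite" and z :: "(real^'n::finite)^'j" and c m :: "real^'j"
  assumes k: "powD m D = t *\<^sub>R c"
  shows "Qf D A z m = t^4 * (\<Sum>i\<in>UNIV. (norm (\<Sum>j\<in>UNIV.
                  (A $ i $ j * c$i * c$j / (norm (z$i - z$j))\<^sup>2) *\<^sub>R (z$j - z$i)))\<^sup>2)"
proof -
  define w where "w i = (\<Sum>j\<in>UNIV. (A$i$j * c$j / (norm (z$i - z$j))\<^sup>2) *\<^sub>R (z$i - z$j))" for i
  have mi: "m$i powr D = t * c$i" for i using k by (simp add: vec_eq_iff powD_def)
  have e1: "(\<Sum>j\<in>UNIV. (A$i$j * powD m D$j / (norm (z$i - z$j))\<^sup>2) *\<^sub>R (z$i - z$j)) = t *\<^sub>R w i" for i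
    unfolding w_def k by (simp add: scaleR_sum_right mult.left_commute)
  have e2: "(\<Sum>j\<in>UNIV. (A $ i $ j * c$i * c$j / (norm (z$i - z$j))\<^sup>2) *\<^sub>R (z$j - z$i)) = - (c$i *\<^sub>R w i)" for i
    unfolding w_def scaleR_sum_right sum_negf[symmetric]
    by (rule sum.cong) (auto simp: algebra_simps)
  show ?thesis unfolding Qf_def e1 e2 powr_2D mi
    by (simp add: sum_distrib_left power_mult_distrib algebra_simps)
qed



lemma Pf_nonneg: "Pf D A m \<ge> 0" unfolding Pf_def by (intro sum_nonneg mult_nonneg_nonneg) auto
lemma Qf_nonneg: "Qf D A z m \<ge> 0" unfolding Qf_def by (intro sum_nonneg mult_nonneg_nonneg) auto
lemma Rf_nonneg: "Rf D A m \<ge> 0" unfolding Rf_def by simp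
lemma Rf_sum: "Rf D A m = (\<Sum>i\<in>UNIV. ((A *v powD m D)$i)\<^sup>2)"
  unfolding Rf_def power2_norm_eq_inner inner_vec_def by (simp add: power2_eq_square)

lemma P_le_R:
  assumes "\<forall>i. 0 \<le> m$i \<and> m$i \<le> 1" "D \<ge> 1"
  shows "Pf D A m \<le> Rf D A m"
  unfolding Pf_def Rf_sum
proof (rule sum_mono)
  fix i
  have "m$i powr (2*D - 2) \<le> 1" using assms by (intro powr_le1) auto
  then show "m$i powr (2*D - 2) * ((A *v powD m D)$i)\<^sup>2 \<le> ((A *v powD m D)$i)\<^sup>2"
    by (intro mult_left_le_one_le) auto
qed

lemma R_le_P_eps:
  assumes "\<forall>i. eps \<le> m$i" "eps > 0" "D \<ge> 1"
  shows "eps powr (2*D - 2) * Rf D A m \<le> Pf D A m"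
  unfolding Pf_def Rf_sum sum_distrib_left
proof (rule sum_mono)
  fix i
  have "eps powr (2*D - 2) \<le> m$i powr (2*D - 2)" using assms by (intro powr_mono2) auto
  then show "eps powr (2*D - 2) * ((A *v powD m D)$i)\<^sup>2 \<le> m$i powr (2*D - 2) * ((A *v powD m D)$i)\<^sup>2"
    by (intro mult_right_mono) auto
qed


lemma eqS: "{min (l$i) (l$j) | i j. i \<noteq> j} = (\<lambda>p. min (l$fst p) (l$snd p)) ` {p. fst p \<noteq> snd p}"
  for l :: "real^'j::finite"
proof (rule set_eqI, rule iffI)
  fix x assume "x \<in> {min (l$i) (l$j) | i j. i \<noteq> j}"
  then obtain i j where "x = min (l$i) (l$j)" "i \<noteq> j" by (auto simp only: mem_Collect_eq)
  then show "x \<in> (\<lambda>p. min (l$fst p) (l$snd p)) ` {p. fst p \<noteq> snd p}"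
    by (intro image_eqI[of _ _ "(i,j)"]) auto
next
  fix x assume "x \<in> (\<lambda>p. min (l$fst p) (l$snd p)) ` {p. fst p \<noteq> snd p}"
  then obtain p where "fst p \<noteq> snd p" "x = min (l$fst p) (l$snd p)" by auto
  then show "x \<in> {min (l$i) (l$j) | i j. i \<noteq> j}" by (auto simp only: mem_Collect_eq)
qed


theorem lemma4p6:
  fixes k0 kinf :: real
    and iota :: "'j::finite \<Rightarrow> real"
    and zs :: "(real^'n::finite)^'j"
    and c :: "real^'j"
  assumes N7: "CARD('n) \<ge> 7"
    and kpos: "k0 > 0" "kinf > 0"
    and iota: "\<forall>i. iota i \<in> {-1, 1}"
    and distinct: "\<forall>i j. i \<noteq> j \<longrightarrow> zs$i \<noteq> zs$j"
    and mindeg: "minimally_degenerate (Amat k0 kinf iota zs)"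
    and cpos: "\<forall>i. c$i > 0" and cunit: "norm c = 1"
    and ckern: "{x. Amat k0 kinf iota zs *v x = 0} = range (\<lambda>t. t *\<^sub>R c)"
    and vpos: "(\<Sum>i\<in>UNIV. (norm (\<Sum>j\<in>UNIV.
                  (Amat k0 kinf iota zs $ i $ j * c$i * c$j / (norm (zs$i - zs$j))\<^sup>2)
                    *\<^sub>R (zs$j - zs$i)))\<^sup>2) > 0"
  shows "\<forall>K0 > 0. \<forall>\<delta>1 > 0. \<exists>\<delta>2 > 0. \<exists>C > 0. \<forall>(l::real^'j) (z::(real^'n)^'j).
     (\<forall>i. l$i > 0) \<and> lam_max l \<le> K0 \<and> lam_max2 l \<ge> \<delta>1 * lam_max l \<and> norm (z - zs) < \<delta>2
     \<longrightarrow>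
     (let D = Dexp TYPE('n); A = Amat k0 kinf iota z; lD = powD l D;
          LHS = (\<Sum>i\<in>UNIV. (l$i) powr (2*D - 2) * ((A *v lD)$i)\<^sup>2)
              + (\<Sum>i\<in>UNIV. (l$i) powr (2*D) *
                   (norm (\<Sum>j\<in>UNIV. (A$i$j * lD$j / (norm (z$i - z$j))\<^sup>2) *\<^sub>R (z$i - z$j)))\<^sup>2);
          RHS = (lam_max l) powr (2*D - 2) * (norm (A *v lD))\<^sup>2 + (lam_max l) powr (4*D)
      in LHS \<le> C * RHS \<and> RHS \<le> C * LHS)"
proof (intro allI impI)
  fix K0 \<delta>1 :: real assume K0: "K0 > 0" and d1: "\<delta>1 > 0"
  define D where "D = Dexp TYPE('n)"
  have D: "D \<ge> 5/2" using N7 by (simp add: D_def Dexp_def)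
  define As where "As = Amat k0 kinf iota zs"
  define vs where "vs = (\<Sum>i\<in>UNIV. (norm (\<Sum>j\<in>UNIV.
                  (As $ i $ j * c$i * c$j / (norm (zs$i - zs$j))\<^sup>2) *\<^sub>R (zs$j - zs$i)))\<^sup>2)"
  have vs: "vs > 0" using vpos by (simp add: vs_def As_def)
  obtain i0 j0 :: 'j where ij0: "i0 \<noteq> j0"
  proof -
    have "\<exists>i0 j0::'j. i0 \<noteq> j0"
    proof (rule ccontr)
      assume "\<not> (\<exists>i0 j0::'j. i0 \<noteq> j0)"
      then have "\<forall>i j::'j. i = j" by blast
      then have "\<forall>i j. As $ i $ j = 0" by (auto simp: As_def Amat_def)
      then have "vs = 0" by (simp add: vs_def)
      then show False using vs by simp
    qed
    then show ?thesis using that by blast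
  qed
  obtain r where r: "r > 0" "\<forall>z. dist zs z \<le> r \<longrightarrow> (\<forall>i j. i \<noteq> j \<longrightarrow> z$i \<noteq> z$j)"
  proof -
    define PP where "PP = {p::'j\<times>'j. fst p \<noteq> snd p}"
    define dm where "dm = Min ((\<lambda>p. norm (zs$fst p - zs$snd p)) ` PP)"
    have fin: "finite ((\<lambda>p. norm (zs$fst p - zs$snd p)) ` PP)" by simp
    have ne: "(\<lambda>p. norm (zs$fst p - zs$snd p)) ` PP \<noteq> {}" using ij0 by (auto simp: PP_def)
    have dmpos: "dm > 0" unfolding dm_def using distinct
      by (subst Min_gr_iff[OF fin ne]) (auto simp: PP_def)
    have dmle: "dm \<le> norm (zs$i - zs$j)" if "i \<noteq> j" for i j
      unfolding dm_def using that by (intro Min_le fin) (auto simp: PP_def image_iff intro!: bexI[of _ "(i,j)"])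
    have "\<forall>z. dist zs z \<le> dm/3 \<longrightarrow> (\<forall>i j. i \<noteq> j \<longrightarrow> z$i \<noteq> z$j)"
    proof (intro allI impI)
      fix z :: "(real^'n)^'j" and i j :: 'j assume z: "dist zs z \<le> dm/3" and ij: "i \<noteq> j"
      show "z$i \<noteq> z$j"
      proof
        assume eq: "z$i = z$j"
        have "zs$i - zs$j = (zs - z)$i - (zs - z)$j" using eq by simp
        then have "norm (zs$i - zs$j) \<le> norm ((zs - z)$i) + norm ((zs - z)$j)"
          by (metis norm_triangle_ineq4)
        also have "\<dots> \<le> 2 * norm (zs - z)" using Finite_Cartesian_Product.norm_nth_le[where x="zs - z" and i=i] Finite_Cartesian_Product.norm_nth_le[where x="zs - z" and i=j] by simp
        also have "\<dots> \<le> 2 * (dm/3)" using z by (simp add: dist_norm)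
        finally show False using dmle[OF ij] dmpos by simp
      qed
    qed
    then show ?thesis using that dmpos by (metis divide_pos_pos zero_less_numeral)
  qed
  define Mu where "Mu = {m::real^'j. (\<forall>i. 0 \<le> m$i \<and> m$i \<le> 1) \<and> (\<exists>i j. i \<noteq> j \<and> \<delta>1 \<le> m$i \<and> \<delta>1 \<le> m$j)}"
  have Mu_eq: "Mu = {m. \<forall>i. 0 \<le> m$i \<and> m$i \<le> 1} \<inter> (\<Union>i. \<Union>j. {m. i \<noteq> j \<and> \<delta>1 \<le> m$i \<and> \<delta>1 \<le> m$j})"
    unfolding Mu_def by blast
  have cMu: "closed Mu" unfolding Mu_eq
    by (intro closed_Int closed_Collect_all closed_Collect_conj closed_Collect_le closed_UN
        closed_Collect_const continuous_intros finite)
      (auto intro!: closed_UN closed_Collect_conj closed_Collect_le continuous_intros)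
  have bMu: "bounded Mu"
    by (rule bounded_subset[OF bounded_cbox[of 0 1]]) (auto simp: Mu_def mem_box_cart)
  have kMu: "compact Mu" using cMu bMu by (simp add: compact_eq_bounded_closed)
  define cmin where "cmin = Min (range (\<lambda>i. c$i))"
  have cmin_le: "cmin \<le> c$i" for i unfolding cmin_def by (intro Min_le) auto
  have cmin_pos: "cmin > 0" unfolding cmin_def using cpos by (subst Min_gr_iff) auto
  have c_le1: "c$i \<le> 1" for i
    using Finite_Cartesian_Product.norm_nth_le[where x=c and i=i] cunit by simp
  define eps where "eps = \<delta>1 * (cmin/2) powr (1/D)"
  have eps_pos: "eps > 0" using d1 cmin_pos by (simp add: eps_def)
  have eps_D: "eps powr D = \<delta>1 powr D * (cmin/2)"
    using D cmin_pos d1 by (simp add: eps_def powr_mult powr_powr)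
  define M' where "M' = Mu \<inter> {m. \<exists>i. m$i \<le> eps}"
  have kM': "compact M'"
  proof -
    have "{m::real^'j. \<exists>i. m$i \<le> eps} = (\<Union>i. {m. m$i \<le> eps})" by blast
    then have "closed {m::real^'j. \<exists>i. m$i \<le> eps}"
      by (auto intro!: closed_UN closed_Collect_le continuous_intros)
    then show ?thesis unfolding M'_def using kMu by (intro compact_Int_closed)
  qed
  have M'sub: "M' \<subseteq> Mu" by (auto simp: M'_def)
  define K where "K = Mu \<times> cball zs r"
  have kK: "compact K" unfolding K_def using kMu by (intro compact_Times) auto
  have Kd: "\<forall>p\<in>K. \<forall>i j. i \<noteq> j \<longrightarrow> snd p $ i \<noteq> snd p $ j" using r by (auto simp: K_def)
  have Kn: "\<forall>p\<in>K. \<forall>i. 0 \<le> fst p $ i" by (auto simp: K_def Mu_def)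
  have D1: "D > 1" using D by simp
  note contK = cont_PQR[OF Kd Kn D1, of k0 kinf iota]
  have K'sub: "M' \<times> cball zs r \<subseteq> K" using M'sub by (auto simp: K_def)
  have contK' : "continuous_on (M' \<times> cball zs r) (\<lambda>p. Pf D (Amat k0 kinf iota (snd p)) (fst p))"
    by (rule continuous_on_subset[OF contK(1) K'sub])
  have contF: "continuous_on K (\<lambda>p. Pf D (Amat k0 kinf iota (snd p)) (fst p)
       + Qf D (Amat k0 kinf iota (snd p)) (snd p) (fst p))"
    by (intro continuous_on_add contK)
  have kern: "(\<forall>i. m$i > 0) \<and> (\<exists>t. t > 0 \<and> powD m D = t *\<^sub>R c)"
    if mMu: "m \<in> Mu" and P0: "Pf D As m = 0" for m
  proof -
    obtain i1 j1 where ij1: "i1 \<noteq> j1" "\<delta>1 \<le> m$i1" "\<delta>1 \<le> m$j1" using mMu by (auto simp: Mu_def)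
    have "(\<forall>i. m$i > 0) \<and> As *v powD m D = 0"
      by (rule P_zero_kernel[OF mindeg[folded As_def] _ ij1(1) _ _ P0]) (use mMu ij1 d1 in \<open>auto simp: Mu_def\<close>)
    then have ap: "\<forall>i. m$i > 0" and ker: "As *v powD m D = 0" by auto
    have "powD m D \<in> range (\<lambda>t. t *\<^sub>R c)" using ckern ker by (auto simp: As_def)
    then obtain t where t: "powD m D = t *\<^sub>R c" by auto
    have "m$i1 powr D = t * c$i1" using t by (simp add: vec_eq_iff powD_def)
    moreover have "m$i1 powr D > 0" using ap[rule_format, of i1] by simp
    ultimately have "t > 0" using cpos by (metis zero_less_mult_pos2)
    then show ?thesis using ap t by blast
  qed
  have posF: "\<forall>m\<in>Mu. Pf D (Amat k0 kinf iota zs) m + Qf D (Amat k0 kinf iota zs) zs m > 0"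
  proof
    fix m assume mMu: "m \<in> Mu"
    show "Pf D (Amat k0 kinf iota zs) m + Qf D (Amat k0 kinf iota zs) zs m > 0"
    proof (cases "Pf D As m = 0")
      case True
      obtain t where t: "t > 0" "powD m D = t *\<^sub>R c" using kern[OF mMu True] by blast
      have "Qf D As zs m = t^4 * vs" unfolding vs_def by (rule Q_kernel[OF t(2)])
      then have "Qf D As zs m > 0" using t vs by simp
      then show ?thesis using Pf_nonneg[of D As m] by (simp add: As_def)
    next
      case False
      then show ?thesis using Pf_nonneg[of D As m] Qf_nonneg[of D As zs m]
        by (simp add: As_def)
    qed
  qed
  have posP: "\<forall>m\<in>M'. Pf D (Amat k0 kinf iota zs) m > 0"
  proof
    fix m assume mM': "m \<in> M'"
    then have mMu: "m \<in> Mu" by (simp add: M'_def)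
    obtain k where k: "m$k \<le> eps" using mM' by (auto simp: M'_def)
    obtain i1 where i1: "\<delta>1 \<le> m$i1" using mMu by (auto simp: Mu_def)
    show "Pf D (Amat k0 kinf iota zs) m > 0"
    proof (rule ccontr)
      assume "\<not> Pf D (Amat k0 kinf iota zs) m > 0"
      then have P0: "Pf D As m = 0" using Pf_nonneg[of D As m] by (simp add: As_def)
      obtain t where t: "t > 0" "powD m D = t *\<^sub>R c" and ap: "\<forall>i. m$i > 0"
        using kern[OF mMu P0] by blast
      have mi: "m$i powr D = t * c$i" for i using t by (simp add: vec_eq_iff powD_def)
      have "\<delta>1 powr D \<le> m$i1 powr D" using i1 d1 D by (intro powr_mono2) auto
      also have "\<dots> = t * c$i1" by (rule mi)
      also have "\<dots> \<le> t" using c_le1[of i1] t by simp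
      finally have tge: "\<delta>1 powr D \<le> t" .
      have "m$k powr D \<le> eps powr D" using k ap D by (intro powr_mono2) (auto simp: less_imp_le)
      then have "t * c$k \<le> \<delta>1 powr D * (cmin/2)" using mi eps_D by simp
      moreover have "\<delta>1 powr D * cmin \<le> t * c$k"
        using tge cmin_le[of k] cmin_pos d1 t(1) by (intro mult_mono) auto
      moreover have "\<delta>1 powr D > 0" using d1 by simp
      moreover have "\<delta>1 powr D * (cmin/2) < \<delta>1 powr D * cmin"
        using cmin_pos d1 by (intro mult_strict_left_mono) auto
      ultimately show False by linarith
    qed
  qed
  obtain mq dA where mq: "mq > 0" "dA > 0" "dA \<le> r"
    "\<forall>m\<in>Mu. \<forall>z. dist zs z < dA \<longrightarrow> Pf D (Amat k0 kinf iota z) m + Qf D (Amat k0 kinf iota z) z m \<ge> mq"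
  proof -
    have "\<exists>c>0. \<exists>d>0. d \<le> r \<and> (\<forall>m\<in>Mu. \<forall>z. dist zs z < d \<longrightarrow> c \<le>
       Pf D (Amat k0 kinf iota (snd (m, z))) (fst (m, z)) + Qf D (Amat k0 kinf iota (snd (m, z))) (snd (m, z)) (fst (m, z)))"
      by (rule unif_pos[OF kMu r(1) contF[unfolded K_def]]) (use posF in simp)
    then show ?thesis using that by auto
  qed
  obtain p0 dB where p0: "p0 > 0" "dB > 0" "dB \<le> r"
    "\<forall>m\<in>M'. \<forall>z. dist zs z < dB \<longrightarrow> Pf D (Amat k0 kinf iota z) m \<ge> p0"
  proof -
    have "\<exists>c>0. \<exists>d>0. d \<le> r \<and> (\<forall>m\<in>M'. \<forall>z. dist zs z < d \<longrightarrow> c \<le>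
       Pf D (Amat k0 kinf iota (snd (m, z))) (fst (m, z)))"
      by (rule unif_pos[OF kM' r(1) contK']) (use posP in simp)
    then show ?thesis using that by auto
  qed
  obtain Qmax where Qmax: "\<forall>p\<in>K. Qf D (Amat k0 kinf iota (snd p)) (snd p) (fst p) \<le> Qmax"
    using unif_bound[OF kK contK(2)] by blast
  obtain Rmax where Rmax: "\<forall>p\<in>K. Rf D (Amat k0 kinf iota (snd p)) (fst p) \<le> Rmax"
    using unif_bound[OF kK contK(3)] by blast
  define \<delta>2 where "\<delta>2 = min dA dB"
  define C1 where "C1 = max (1 / eps powr (2*D - 2)) (Rmax / p0)"
  define QM where "QM = max 1 Qmax"
  define C where "C = max QM (C1 + (K0\<^sup>2 + 1) / mq)"
  have C1pos: "C1 > 0" using eps_pos by (simp add: C1_def less_max_iff_disj)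
  have QM1: "QM \<ge> 1" by (simp add: QM_def)
  have Cpos: "C > 0" using QM1 by (simp add: C_def less_max_iff_disj)
  have d2pos: "\<delta>2 > 0" using mq p0 by (simp add: \<delta>2_def)
  show "\<exists>\<delta>2>0. \<exists>C>0. \<forall>(l::real^'j) (z::(real^'n)^'j).
     (\<forall>i. l$i > 0) \<and> lam_max l \<le> K0 \<and> lam_max2 l \<ge> \<delta>1 * lam_max l \<and> norm (z - zs) < \<delta>2
     \<longrightarrow>
     (let D = Dexp TYPE('n); A = Amat k0 kinf iota z; lD = powD l D;
          LHS = (\<Sum>i\<in>UNIV. (l$i) powr (2*D - 2) * ((A *v lD)$i)\<^sup>2)
              + (\<Sum>i\<in>UNIV. (l$i) powr (2*D) *
                   (norm (\<Sum>j\<in>UNIV. (A$i$j * lD$j / (norm (z$i - z$j))\<^sup>2) *\<^sub>R (z$i - z$j)))\<^sup>2);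
          RHS = (lam_max l) powr (2*D - 2) * (norm (A *v lD))\<^sup>2 + (lam_max l) powr (4*D)
      in LHS \<le> C * RHS \<and> RHS \<le> C * LHS)"
  proof (rule exI[of _ \<delta>2], rule conjI[OF d2pos], rule exI[of _ C], rule conjI[OF Cpos], intro allI impI)
    fix l :: "real^'j" and z :: "(real^'n)^'j"
    assume H: "(\<forall>i. l$i > 0) \<and> lam_max l \<le> K0 \<and> lam_max2 l \<ge> \<delta>1 * lam_max l \<and> norm (z - zs) < \<delta>2"
    then have lpos: "\<forall>i. l$i > 0" and sK: "lam_max l \<le> K0" and l2: "lam_max2 l \<ge> \<delta>1 * lam_max l"
      and zn: "norm (z - zs) < \<delta>2" by auto
    define s where "s = lam_max l"
    have l_le: "l$i \<le> s" for i unfolding s_def lam_max_def by (intro Max_ge) auto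
    have s_in: "s \<in> range (\<lambda>i. l$i)" unfolding s_def lam_max_def by (intro Max_in) auto
    have spos: "s > 0" using s_in lpos by auto
    have sK0: "s \<le> K0" using sK by (simp add: s_def)
    have eqS: "{min (l$i) (l$j) | i j. i \<noteq> j} = (\<lambda>p. min (l$fst p) (l$snd p)) ` {p. fst p \<noteq> snd p}"
      by (rule eqS)
    have "lam_max2 l \<in> {min (l$i) (l$j) | i j. i \<noteq> j}"
      unfolding lam_max2_def eqS by (intro Max_in) (use ij0 in auto)
    then obtain i1 j1 where ij1: "lam_max2 l = min (l$i1) (l$j1)" "i1 \<noteq> j1" by (auto simp only: mem_Collect_eq)
    have li1: "\<delta>1 * s \<le> l$i1" "\<delta>1 * s \<le> l$j1" using ij1(1) l2 unfolding s_def by linarith+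
    define m where "m = (1/s) *\<^sub>R l"
    have lm: "l = s *\<^sub>R m" using spos by (simp add: m_def vec_eq_iff)
    have mi: "m$i = l$i / s" for i by (simp add: m_def)
    have mMu: "m \<in> Mu" unfolding Mu_def
    proof (intro CollectI conjI allI exI)
      fix i
      show "0 \<le> m$i" using lpos spos by (simp add: mi less_imp_le)
      show "m$i \<le> 1" using l_le[of i] spos by (simp add: mi)
    next
      show "i1 \<noteq> j1" by (rule ij1(2))
      show "\<delta>1 \<le> m$i1" "\<delta>1 \<le> m$j1" using li1 spos by (simp_all add: mi pos_le_divide_eq)
    qed
    have dz: "dist zs z < \<delta>2" using zn by (simp add: dist_norm norm_minus_commute)
    have zr: "z \<in> cball zs r" using dz mq(3) by (simp add: \<delta>2_def)
    have mzK: "(m, z) \<in> K" using mMu zr by (simp add: K_def)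
    define A where "A = Amat k0 kinf iota z"
    define P where "P = Pf D A m"
    define Q where "Q = Qf D A z m"
    define R where "R = Rf D A m"
    have P0: "P \<ge> 0" "Q \<ge> 0" "R \<ge> 0" by (simp_all add: P_def Q_def R_def Pf_nonneg Qf_nonneg Rf_nonneg)
    have PR: "P \<le> R" unfolding P_def R_def using mMu D by (intro P_le_R) (auto simp: Mu_def)
    have Qb: "Q \<le> QM" using Qmax[rule_format, OF mzK] by (simp add: Q_def A_def QM_def)
    have PQ: "P + Q \<ge> mq" using mq(4) mMu dz by (simp add: P_def Q_def A_def \<delta>2_def)
    have RC1: "R \<le> C1 * P"
    proof (cases "\<forall>i. eps \<le> m$i")
      case True
      have "eps powr (2*D - 2) * R \<le> P" unfolding P_def R_def using True eps_pos D by (intro R_le_P_eps) auto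
      then have "R \<le> (1 / eps powr (2*D - 2)) * P" using eps_pos by (simp add: field_simps)
      also have "\<dots> \<le> C1 * P" using P0 by (intro mult_right_mono) (auto simp: C1_def)
      finally show ?thesis .
    next
      case False
      then obtain i where "m$i < eps" by (auto simp: not_le)
      then have "m \<in> M'" using mMu unfolding M'_def by (auto intro!: exI[of _ i])
      then have Pp: "P \<ge> p0" using p0(4) dz by (simp add: P_def A_def \<delta>2_def)
      have Rm: "R \<le> Rmax" using Rmax[rule_format, OF mzK] by (simp add: R_def A_def)
      have "R \<le> Rmax * 1" using Rm by simp
      also have "\<dots> \<le> Rmax * (P / p0)" using Rm P0 Pp p0 by (intro mult_left_mono) auto
      also have "\<dots> = (Rmax / p0) * P" by simp
      also have "\<dots> \<le> C1 * P" using P0 by (intro mult_right_mono) (auto simp: C1_def)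
      finally show ?thesis .
    qed
    have ss: "s\<^sup>2 \<le> K0\<^sup>2" using spos sK0 by (intro power_mono) auto
    have core1: "P + s\<^sup>2 * Q \<le> C * (R + s\<^sup>2)"
    proof -
      have "s\<^sup>2 * Q \<le> s\<^sup>2 * QM" using Qb by (intro mult_left_mono) auto
      moreover have "R \<le> QM * R" using QM1 P0 by (simp add: mult_le_cancel_right1)
      ultimately have "P + s\<^sup>2 * Q \<le> QM * (R + s\<^sup>2)" using PR by (simp add: algebra_simps)
      also have "\<dots> \<le> C * (R + s\<^sup>2)" using P0 by (intro mult_right_mono) (auto simp: C_def)
      finally show ?thesis .
    qed
    have core2: "R + s\<^sup>2 \<le> C * (P + s\<^sup>2 * Q)"
    proof -
      have "s\<^sup>2 \<le> s\<^sup>2 * ((P + Q) / mq)" using PQ mq(1)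
        by (intro mult_le_cancel_left1[THEN iffD2] ) (auto simp: field_simps)
      also have "\<dots> = (s\<^sup>2 * P + s\<^sup>2 * Q) / mq" by (simp add: algebra_simps)
      also have "\<dots> \<le> (K0\<^sup>2 * P + s\<^sup>2 * Q) / mq" using ss P0 mq(1)
        by (intro divide_right_mono add_right_mono mult_right_mono) auto
      also have "\<dots> \<le> ((K0\<^sup>2 + 1) * (P + s\<^sup>2 * Q)) / mq" using P0 mq(1)
        by (intro divide_right_mono) (auto simp: algebra_simps)
      finally have a: "s\<^sup>2 \<le> ((K0\<^sup>2 + 1) / mq) * (P + s\<^sup>2 * Q)" by simp
      have b: "R \<le> C1 * (P + s\<^sup>2 * Q)" using RC1 C1pos P0
        by (smt (verit) mult_left_mono zero_le_power2 mult_nonneg_nonneg)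
      have "R + s\<^sup>2 \<le> (C1 + (K0\<^sup>2 + 1) / mq) * (P + s\<^sup>2 * Q)" using a b by (simp add: algebra_simps)
      also have "\<dots> \<le> C * (P + s\<^sup>2 * Q)" using P0 by (intro mult_right_mono) (auto simp: C_def)
      finally show ?thesis .
    qed
    define a where "a = s powr (4*D - 2)"
    have apos: "a > 0" using spos by (simp add: a_def)
    have f1: "a * (P + s\<^sup>2 * Q) \<le> C * (a * (R + s\<^sup>2))"
      using mult_left_mono[OF core1, of a] apos by (simp add: algebra_simps)
    have f2: "a * (R + s\<^sup>2) \<le> C * (a * (P + s\<^sup>2 * Q))"
      using mult_left_mono[OF core2, of a] apos by (simp add: algebra_simps)
    show "let D = Dexp TYPE('n); A = Amat k0 kinf iota z; lD = powD l D;
          LHS = (\<Sum>i\<in>UNIV. (l$i) powr (2*D - 2) * ((A *v lD)$i)\<^sup>2)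
              + (\<Sum>i\<in>UNIV. (l$i) powr (2*D) *
                   (norm (\<Sum>j\<in>UNIV. (A$i$j * lD$j / (norm (z$i - z$j))\<^sup>2) *\<^sub>R (z$i - z$j)))\<^sup>2);
          RHS = (lam_max l) powr (2*D - 2) * (norm (A *v lD))\<^sup>2 + (lam_max l) powr (4*D)
      in LHS \<le> C * RHS \<and> RHS \<le> C * LHS"
      unfolding Let_def D_def[symmetric] s_def[symmetric] A_def[symmetric]
      unfolding lm scale_P[OF spos] scale_Q[OF spos] scale_R[OF spos] scale_4D[OF spos]
      unfolding P_def[symmetric] Q_def[symmetric] R_def[symmetric] a_def[symmetric]
      using f1 f2 by (simp add: algebra_simps)
  qed
qed


end
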